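(* Let $p=\tfrac12$, $\mu=\mu_{1/2}$, and fix $m\ge0$. Let $\phi=1_C$ and $h_w=1_{C_{w0}}-1_{C_{w2}}$ for words $|w|\le m-1$. Then $\{\phi\}\cup\{h_w:|w|\le m-1\}$ is an orthogonal basis of $\mathcal F_m$, and $K_m$ is diagonal in this basis: $K_m\phi=(2-2^{-m})\phi$, and if $|w|=\ell$ with $0\le\ell\le m-1$, then $K_mh_w=2^{-\ell}(1-2^{-(m-\ell)})h_w$. Equivalently, $$K_m=\sum_{n=0}^m2^{-n}E_n$$ as an operator on $L^2(\mu)$.
   Context: Let $S_0(x)=x/3$, $S_2(x)=(x+2)/3$ on $[0,1]$ and let $C$ be the middle-third Cantor set. $\mu=\mu_{1/2}$ is the unique Borel probability measure on $[0,1]$ with $\mu=\frac12\mu\circ S_0^{-1}+\frac12\mu\circ S_2^{-1}$. For words $w\in\{0,2\}^n$, $|w|=n$, $S_w=S_{w_1}\circ\cdots\circ S_{w_n}$ ($S_\varnothing=\mathrm{id}$), $C_w=S_w(C)$; $wa$ is concatenation. Inner product $\langle f,g\rangle=\int\overline fg\,d\mu$. $\mathcal F_m=\mathrm{span}\{1_{C_u}:|u|\le m\}$, $K_mf=\sum_{|u|\le m}\langle1_{C_u},f\rangle1_{C_u}$, and $E_n$ is the conditional expectation (orthogonal projection) onto the functions constant on each level-$n$ cylinder $C_w$, $|w|=n$. *)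

theory Defs
  imports "HOL-Probability.Probability"
begin

definition S :: "nat \<Rightarrow> real \<Rightarrow> real" where
  "S a x = (x + real a) / 3"

definition word :: "nat list \<Rightarrow> bool" where
  "word w \<longleftrightarrow> set w \<subseteq> {0, 2}"

definition words_eq :: "nat \<Rightarrow> nat list set" where
  "words_eq n = {w. word w \<and> length w = n}"

definition words_le :: "nat \<Rightarrow> nat list set" where
  "words_le n = {w. word w \<and> length w \<le> n}"

definition Sw :: "nat list \<Rightarrow> real \<Rightarrow> real" where
  "Sw w = foldr (\<lambda>a g. S a \<circ> g) w id"

definition Cantor :: "real set" where
  "Cantor = (\<Inter>n. \<Union>w\<in>words_eq n. Sw w ` {0..1})"

definition Cyl :: "nat list \<Rightarrow> real set" where
  "Cyl w = Sw w ` Cantor"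

text \<open>Hypotheses characterising mu_{1/2}: a Borel probability measure on [0,1]
  with mu = 1/2 mu o S_0^{-1} + 1/2 mu o S_2^{-1}.\<close>
definition cantor_measure :: "real measure \<Rightarrow> bool" where
  "cantor_measure M \<longleftrightarrow> prob_space M \<and> sets M = sets borel \<and>
     emeasure M {0..1} = 1 \<and>
     (\<forall>A\<in>sets borel. emeasure M A =
        (emeasure M (S 0 -` A \<inter> {0..1}) + emeasure M (S 2 -` A \<inter> {0..1})) / 2)"

definition L2 :: "real measure \<Rightarrow> (real \<Rightarrow> complex) \<Rightarrow> bool" where
  "L2 M f \<longleftrightarrow> f \<in> borel_measurable M \<and> integrable M (\<lambda>x. (cmod (f x))\<^sup>2)"

definition ip :: "real measure \<Rightarrow> (real \<Rightarrow> complex) \<Rightarrow> (real \<Rightarrow> complex) \<Rightarrow> complex" where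
  "ip M f g = integral\<^sup>L M (\<lambda>x. cnj (f x) * g x)"

definition ind :: "real set \<Rightarrow> real \<Rightarrow> complex" where
  "ind A x = (if x \<in> A then 1 else 0)"

definition Fm :: "nat \<Rightarrow> (real \<Rightarrow> complex) set" where
  "Fm m = {f. \<exists>c. f = (\<lambda>x. \<Sum>u\<in>words_le m. c u * ind (Cyl u) x)}"

definition Km :: "real measure \<Rightarrow> nat \<Rightarrow> (real \<Rightarrow> complex) \<Rightarrow> real \<Rightarrow> complex" where
  "Km M m f = (\<lambda>x. \<Sum>u\<in>words_le m. ip M (ind (Cyl u)) f * ind (Cyl u) x)"

definition Gn :: "nat \<Rightarrow> (real \<Rightarrow> complex) set" where
  "Gn n = {g. \<exists>c. g = (\<lambda>x. \<Sum>w\<in>words_eq n. c w * ind (Cyl w) x)}"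

definition En :: "real measure \<Rightarrow> nat \<Rightarrow> (real \<Rightarrow> complex) \<Rightarrow> real \<Rightarrow> complex" where
  "En M n f = (SOME g. g \<in> Gn n \<and> (\<forall>h\<in>Gn n. ip M h (\<lambda>x. f x - g x) = 0))"

definition orthogonal_basis :: "real measure \<Rightarrow> 'i set \<Rightarrow> ('i \<Rightarrow> real \<Rightarrow> complex)
    \<Rightarrow> (real \<Rightarrow> complex) set \<Rightarrow> bool" where
  "orthogonal_basis M I b V \<longleftrightarrow> finite I \<and>
     (\<forall>i\<in>I. L2 M (b i) \<and> ip M (b i) (b i) \<noteq> 0) \<and>
     (\<forall>i\<in>I. \<forall>j\<in>I. i \<noteq> j \<longrightarrow> ip M (b i) (b j) = 0) \<and>
     V = {f. \<exists>c. f = (\<lambda>x. \<Sum>i\<in>I. c i * b i x)}"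

definition phi :: "real \<Rightarrow> complex" where
  "phi = ind Cantor"

definition haar :: "nat list \<Rightarrow> real \<Rightarrow> complex" where
  "haar w = (\<lambda>x. ind (Cyl (w @ [0])) x - ind (Cyl (w @ [2])) x)"

definition basis_fun :: "nat list option \<Rightarrow> real \<Rightarrow> complex" where
  "basis_fun i = (case i of None \<Rightarrow> phi | Some w \<Rightarrow> haar w)"

end

theory Submission
  imports Defs
begin

lemma Sw_Nil[simp]: "Sw [] = id" by (simp add: Sw_def)
lemma Sw_Cons[simp]: "Sw (a # w) = S a \<circ> Sw w" by (simp add: Sw_def)
lemma Sw_append: "Sw (u @ v) = Sw u \<circ> Sw v"
  by (induction u) (auto simp: comp_assoc)

lemma word_Nil[simp]: "word []" by (simp add: word_def)
lemma word_Cons[simp]: "word (a # w) \<longleftrightarrow> (a = 0 \<or> a = 2) \<and> word w"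
  by (auto simp: word_def)
lemma word_append[simp]: "word (u @ v) \<longleftrightarrow> word u \<and> word v"
  by (auto simp: word_def)
lemma word_take: "word w \<Longrightarrow> word (take k w)"
  by (auto simp: word_def dest: in_set_takeD)

lemma finite_words_le: "finite (words_le n)"
proof -
  have "words_le n = {xs. set xs \<subseteq> {0,2} \<and> length xs \<le> n}" by (auto simp: words_le_def word_def)
  then show ?thesis using finite_lists_length_le[of "{0::nat,2}" n] by simp
qed

lemma finite_words_eq: "finite (words_eq n)"
  by (rule finite_subset[OF _ finite_words_le[of n]]) (auto simp: words_eq_def words_le_def)

lemma S_inj: "S a x = S a y \<Longrightarrow> x = y" by (simp add: S_def)

lemma S_range: "a = 0 \<or> a = 2 \<Longrightarrow> x \<in> {0..1} \<Longrightarrow> S a x \<in> {0..1}"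
  by (auto simp: S_def)

lemma S_sep: "x \<in> {0..1} \<Longrightarrow> y \<in> {0..1} \<Longrightarrow> S 0 x \<noteq> S 2 y"
  by (auto simp: S_def)

lemma S_sep': "a = 0 \<or> a = 2 \<Longrightarrow> b = 0 \<or> b = 2 \<Longrightarrow> a \<noteq> b \<Longrightarrow> x \<in> {0..1} \<Longrightarrow> y \<in> {0..1} \<Longrightarrow> S a x \<noteq> S b y"
  by (elim disjE) (auto simp: S_def)

lemma Sw_range: "word w \<Longrightarrow> x \<in> {0..1} \<Longrightarrow> Sw w x \<in> {0..1}"
proof (induction w arbitrary: x)
  case Nil then show ?case by simp
next
  case (Cons a w)
  then have "Sw w x \<in> {0..1}" "a = 0 \<or> a = 2" by auto
  then show ?case using S_range by simp
qed

lemma cont_S: "continuous_on A (S a)"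
  unfolding S_def by (intro continuous_intros) auto

lemma cont_Sw: "continuous_on A (Sw w)"
proof (induction w arbitrary: A)
  case Nil then show ?case by (simp add: continuous_on_id)
  case (Cons a w) then show ?case
    by (simp add: continuous_on_compose2[OF cont_S[of UNIV a] Cons.IH])
qed

lemma Sw_inj: "Sw w x = Sw w y \<Longrightarrow> x = y"
proof (induction w arbitrary: x y)
  case Nil then show ?case by simp
next
  case (Cons a w)
  then have "S a (Sw w x) = S a (Sw w y)" by simp
  then have "Sw w x = Sw w y" by (rule S_inj)
  then show ?case by (rule Cons.IH)
qed

lemma words_eq_0: "words_eq 0 = {[]}" by (auto simp: words_eq_def)
lemma Cantor_alt: "x \<in> Cantor \<longleftrightarrow> (\<forall>n. \<exists>w. word w \<and> length w = n \<and> x \<in> Sw w ` {0..1})"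
  by (auto simp: Cantor_def words_eq_def)

lemma Cantor_sub: "Cantor \<subseteq> {0..1}"
proof
  fix x assume "x \<in> Cantor"
  then obtain w where "length w = 0" "x \<in> Sw w ` {0..1}" using Cantor_alt by blast
  then show "x \<in> {0..1}" by auto
qed

lemma Cantor_closed: "closed Cantor"
  unfolding Cantor_def
proof (intro closed_INT ballI closed_UN)
  fix n show "finite (words_eq n)" by (rule finite_words_eq)
  fix w show "closed (Sw w ` {0..1})"
    by (intro compact_imp_closed compact_continuous_image cont_Sw) auto
qed

lemma Cantor_compact: "compact Cantor"
  using Cantor_closed Cantor_sub bounded_subset[OF bounded_cbox[of 0 "1::real"]]
  by (simp add: compact_eq_bounded_closed)  

lemma S_Cantor: "a = 0 \<or> a = 2 \<Longrightarrow> S a ` Cantor \<subseteq> Cantor"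
proof
  fix x assume a: "a = 0 \<or> a = 2" and "x \<in> S a ` Cantor"
  then obtain y where y: "y \<in> Cantor" "x = S a y" by auto
  show "x \<in> Cantor" unfolding Cantor_alt
  proof
    fix n show "\<exists>w. word w \<and> length w = n \<and> x \<in> Sw w ` {0..1}"
    proof (cases n)
      case 0 then show ?thesis using y Cantor_sub S_range[OF a] by (intro exI[of _ "[]"]) auto
    next
      case (Suc k)
      then obtain w where "word w" "length w = k" "y \<in> Sw w ` {0..1}" using y Cantor_alt by blast
      then show ?thesis using a Suc y by (intro exI[of _ "a # w"]) auto
    qed
  qed
qed

lemma Cantor_split: "x \<in> Cantor \<Longrightarrow> \<exists>a y. (a = 0 \<or> a = 2) \<and> y \<in> Cantor \<and> x = S a y"
proof -
  assume x: "x \<in> Cantor"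
  then obtain w1 where w1: "word w1" "length w1 = 1" "x \<in> Sw w1 ` {0..1}" using Cantor_alt by blast
  then obtain a where a: "w1 = [a]" "a = 0 \<or> a = 2" by (cases w1) auto
  with w1 obtain y where y: "y \<in> {0..1}" "x = S a y" by auto
  have "y \<in> Cantor" unfolding Cantor_alt
  proof
    fix n
    obtain w' where w': "word w'" "length w' = Suc n" "x \<in> Sw w' ` {0..1}" using x Cantor_alt by blast
    then obtain b w where bw: "w' = b # w" by (cases w') auto
    with w' obtain z where z: "z \<in> {0..1}" "x = S b (Sw w z)" by auto
    have b: "b = 0 \<or> b = 2" using w' bw by auto
    have "Sw w z \<in> {0..1}" using Sw_range w' bw z by auto
    then have "b = a" using S_sep'[OF a(2) b] y z by metis
    then have "y = Sw w z" using y z S_inj by metis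
    then show "\<exists>w. word w \<and> length w = n \<and> y \<in> Sw w ` {0..1}" using w' bw z by auto
  qed
  then show ?thesis using a y by blast
qed

lemma Cyl_Nil[simp]: "Cyl [] = Cantor" by (simp add: Cyl_def)
lemma Cyl_Cons: "Cyl (a # w) = S a ` Cyl w" by (simp add: Cyl_def image_comp)

lemma Sw_Cantor: "word w \<Longrightarrow> Sw w ` Cantor \<subseteq> Cantor"
proof (induction w)
  case Nil then show ?case by simp
next
  case (Cons a w)
  then have "S a ` Sw w ` Cantor \<subseteq> S a ` Cantor" by auto
  also have "\<dots> \<subseteq> Cantor" using S_Cantor Cons by auto
  finally show ?case by (simp add: image_comp)
qed

lemma Cyl_sub: "word w \<Longrightarrow> Cyl w \<subseteq> Cantor" using Sw_Cantor by (simp add: Cyl_def)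

lemma Cyl_append_sub: "word v \<Longrightarrow> Cyl (u @ v) \<subseteq> Cyl u"
  unfolding Cyl_def Sw_append using Sw_Cantor[of v] by (auto simp: image_comp[symmetric])

lemma Cyl_take_sub: "word u \<Longrightarrow> Cyl u \<subseteq> Cyl (take k u)"
proof -
  assume "word u"
  then have "word (drop k u)" by (auto simp: word_def dest: in_set_dropD)
  then have "Cyl (take k u @ drop k u) \<subseteq> Cyl (take k u)" by (rule Cyl_append_sub)
  then show ?thesis by simp
qed

lemma Cyl_compact: "compact (Cyl w)"
  unfolding Cyl_def by (intro compact_continuous_image cont_Sw Cantor_compact)

lemma Cyl_borel: "Cyl w \<in> sets borel"
  by (intro borel_closed compact_imp_closed Cyl_compact)

lemma Cyl_in01: "word w \<Longrightarrow> Cyl w \<subseteq> {0..1}" using Cyl_sub Cantor_sub by blast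

lemma Cyl_disj: "word u \<Longrightarrow> word v \<Longrightarrow> length u = length v \<Longrightarrow> u \<noteq> v \<Longrightarrow> Cyl u \<inter> Cyl v = {}"
proof (induction u arbitrary: v)
  case Nil then show ?case by simp
next
  case (Cons a u)
  then obtain b v' where v: "v = b # v'" by (cases v) auto
  show ?case
  proof (cases "a = b")
    case True
    then have "Cyl u \<inter> Cyl v' = {}" using Cons v by auto
    then show ?thesis using True v by (auto simp: Cyl_Cons dest: S_inj)
  next
    case False
    have ab: "a = 0 \<or> a = 2" "b = 0 \<or> b = 2" using Cons v by auto
    show ?thesis
    proof (rule ccontr)
      assume "Cyl (a # u) \<inter> Cyl v \<noteq> {}"
      then obtain y z where yz: "y \<in> Cyl u" "z \<in> Cyl v'" "S a y = S b z" by (auto simp: Cyl_Cons v)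
      have wu: "word u" "word v'" using Cons.prems v by auto
      have "y \<in> {0..1}" "z \<in> {0..1}" using Cyl_in01[OF wu(1)] Cyl_in01[OF wu(2)] yz by auto
      then show False using S_sep'[OF ab False] yz by blast
    qed
  qed
qed

lemma Cyl_exists: "x \<in> Cantor \<Longrightarrow> \<exists>u\<in>words_eq k. x \<in> Cyl u"
proof (induction k arbitrary: x)
  case 0 then show ?case by (auto simp: words_eq_def intro!: bexI[of _ "[]"])
next
  case (Suc k)
  then obtain a y where ay: "a = 0 \<or> a = 2" "y \<in> Cantor" "x = S a y" using Cantor_split by blast
  then obtain u where "u \<in> words_eq k" "y \<in> Cyl u" using Suc by blast
  then show ?case using ay by (intro bexI[of _ "a # u"]) (auto simp: words_eq_def Cyl_Cons)
qed

lemma Cantor_Cyl_split: "word w \<Longrightarrow> Cyl w = Cyl (w @ [0]) \<union> Cyl (w @ [2])"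
proof -
  have "Cantor = S 0 ` Cantor \<union> S 2 ` Cantor"
  proof
    show "Cantor \<subseteq> S 0 ` Cantor \<union> S 2 ` Cantor"
    proof
      fix x assume "x \<in> Cantor"
      then obtain a y where "a = 0 \<or> a = 2" "y \<in> Cantor" "x = S a y" using Cantor_split by blast
      then show "x \<in> S 0 ` Cantor \<union> S 2 ` Cantor" by auto
    qed
    show "S 0 ` Cantor \<union> S 2 ` Cantor \<subseteq> Cantor" using S_Cantor[of 0] S_Cantor[of 2] by auto
  qed
  then have "Sw w ` Cantor = Sw w ` S 0 ` Cantor \<union> Sw w ` S 2 ` Cantor" by (metis image_Un)
  then show ?thesis by (simp add: Cyl_def Sw_append image_comp)
qed

definition addr :: "real \<Rightarrow> nat \<Rightarrow> nat list" where
  "addr x k = (THE u. u \<in> words_eq k \<and> x \<in> Cyl u)"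

lemma addr: assumes "x \<in> Cantor" shows "addr x k \<in> words_eq k" "x \<in> Cyl (addr x k)"
  and "u \<in> words_eq k \<Longrightarrow> x \<in> Cyl u \<Longrightarrow> u = addr x k"
proof -
  obtain u0 where u0: "u0 \<in> words_eq k" "x \<in> Cyl u0" using Cyl_exists[OF assms, of k] by blast
  have ex1: "\<exists>!u. u \<in> words_eq k \<and> x \<in> Cyl u"
  proof (rule ex1I[of _ u0])
    show "u0 \<in> words_eq k \<and> x \<in> Cyl u0" using u0 by blast
    fix u assume "u \<in> words_eq k \<and> x \<in> Cyl u"
    then show "u = u0" using Cyl_disj[of u u0] u0 by (auto simp: words_eq_def)
  qed
  show "addr x k \<in> words_eq k" "x \<in> Cyl (addr x k)" using theI'[OF ex1] by (auto simp: addr_def)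
  show "u \<in> words_eq k \<Longrightarrow> x \<in> Cyl u \<Longrightarrow> u = addr x k" using ex1 theI'[OF ex1] by (auto simp: addr_def)
qed

lemma addr_take: assumes "x \<in> Cantor" "j \<le> k" shows "take j (addr x k) = addr x j"
proof -
  have "addr x k \<in> words_eq k" "x \<in> Cyl (addr x k)" using addr[OF assms(1)] by auto
  then have "take j (addr x k) \<in> words_eq j" "x \<in> Cyl (take j (addr x k))"
    using Cyl_take_sub assms(2) by (auto simp: words_eq_def word_take)
  then show ?thesis using addr(3)[OF assms(1)] by blast
qed

lemma sum_words_eq_pt: assumes "x \<in> Cantor"
  shows "(\<Sum>u\<in>words_eq k. F u * ind (Cyl u) x) = F (addr x k)"
proof -
  have "(\<Sum>u\<in>words_eq k. F u * ind (Cyl u) x) = F (addr x k) * ind (Cyl (addr x k)) x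
        + (\<Sum>u\<in>words_eq k - {addr x k}. F u * ind (Cyl u) x)"
    by (rule sum.remove[OF finite_words_eq addr(1)[OF assms]])
  also have "(\<Sum>u\<in>words_eq k - {addr x k}. F u * ind (Cyl u) x) = 0"
    using addr(3)[OF assms] by (intro sum.neutral) (auto simp: ind_def)
  finally show ?thesis using addr[OF assms] by (simp add: ind_def)
qed

lemma sum_words_eq_out: assumes "x \<notin> Cantor" "word u" shows "ind (Cyl u) x = 0"
  using assms Cyl_sub by (auto simp: ind_def)

lemma words_le_Suc: "words_le (Suc m) = words_le m \<union> words_eq (Suc m)"
  by (auto simp: words_le_def words_eq_def)

lemma sum_words_le: "(\<Sum>u\<in>words_le m. G u) = (\<Sum>k\<le>m. \<Sum>u\<in>words_eq k. G u)"
proof (induction m)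
  case 0
  have "words_le 0 = words_eq 0" by (auto simp: words_le_def words_eq_def)
  then show ?case by simp
next
  case (Suc m)
  have h: "(\<Sum>u\<in>words_le (Suc m). G u) = (\<Sum>u\<in>words_le m. G u) + (\<Sum>u\<in>words_eq (Suc m). G u)"
    unfolding words_le_Suc
    by (rule sum.union_disjoint[OF finite_words_le finite_words_eq]) (auto simp: words_le_def words_eq_def)
  show ?case by (simp only: h Suc.IH sum.atMost_Suc)
qed


lemma lin4: "integrable M (f::_\<Rightarrow>real) \<Longrightarrow> integrable M g \<Longrightarrow> integrable M h \<Longrightarrow> integrable M k \<Longrightarrow>
  integral\<^sup>L M (\<lambda>x. f x - g x - h x + k x) = integral\<^sup>L M f - integral\<^sup>L M g - integral\<^sup>L M h + integral\<^sup>L M k"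
  by (simp add: Bochner_Integration.integral_add Bochner_Integration.integral_diff)

context fixes M assumes cm: "cantor_measure M" begin

lemma pM: "prob_space M" using cm by (simp add: cantor_measure_def)
lemma sets_M: "sets M = sets borel" using cm by (simp add: cantor_measure_def)
lemma space_M: "space M = UNIV" using sets_eq_imp_space_eq[OF sets_M] by simp

lemma emeq: "emeasure M A = ennreal (measure M A)"
  using pM by (simp add: prob_space_def finite_measure.emeasure_eq_measure)

lemma S_pre_borel: "A \<in> sets borel \<Longrightarrow> S a -` A \<inter> {0..1} \<in> sets borel"
proof -
  assume A: "A \<in> sets borel"
  have "S a \<in> borel_measurable borel" by (intro borel_measurable_continuous_onI cont_S)
  from measurable_sets[OF this A] have "S a -` A \<in> sets borel" by simp
  then show ?thesis by (rule sets.Int[OF _ borel_closed[OF closed_atLeastAtMost]])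
qed

lemma selfsim: assumes A: "A \<in> sets borel"
  shows "measure M A = (measure M (S 0 -` A \<inter> {0..1}) + measure M (S 2 -` A \<inter> {0..1})) / 2"
proof -
  have "emeasure M A = (emeasure M (S 0 -` A \<inter> {0..1}) + emeasure M (S 2 -` A \<inter> {0..1})) / 2"
    using cm A by (simp add: cantor_measure_def)
  also have "\<dots> = ennreal ((measure M (S 0 -` A \<inter> {0..1}) + measure M (S 2 -` A \<inter> {0..1})) / 2)"
  proof -
    have "emeasure M (S 0 -` A \<inter> {0..1}) + emeasure M (S 2 -` A \<inter> {0..1})
       = ennreal (measure M (S 0 -` A \<inter> {0..1}) + measure M (S 2 -` A \<inter> {0..1}))"
      unfolding emeq by (rule ennreal_plus[symmetric]) simp_all
    moreover have "ennreal (measure M (S 0 -` A \<inter> {0..1}) + measure M (S 2 -` A \<inter> {0..1})) / ennreal 2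
       = ennreal ((measure M (S 0 -` A \<inter> {0..1}) + measure M (S 2 -` A \<inter> {0..1})) / 2)"
      by (rule divide_ennreal) simp_all
    ultimately show ?thesis by simp
  qed
  finally have "ennreal (measure M A) = ennreal ((measure M (S 0 -` A \<inter> {0..1}) + measure M (S 2 -` A \<inter> {0..1})) / 2)"
    by (simp only: emeq)
  then show ?thesis by (subst (asm) ennreal_inj) simp_all
qed

lemma half: assumes a: "a = 0 \<or> a = 2" and A: "A \<subseteq> {0..1}" "A \<in> sets borel" and SA: "S a ` A \<in> sets borel"
  shows "measure M (S a ` A) = measure M A / 2"
proof -
  have pre: "S b -` (S a ` A) \<inter> {0..1} = (if b = a then A else {})" if b: "b = 0 \<or> b = 2" for b
  proof (cases "b = a")
    case True then show ?thesis using A by (auto dest: S_inj)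
  next
    case False
    have "S b y \<noteq> S a z" if "y \<in> {0..1}" "z \<in> A" for y z
      using S_sep'[OF b a False] that A by blast
    then show ?thesis using False by auto
  qed
  show ?thesis using selfsim[OF SA] pre[of 0] pre[of 2] a by auto
qed

definition V :: "nat \<Rightarrow> real set" where "V n = (\<Union>w\<in>words_eq n. Sw w ` {0..1})"

lemma V_borel: "V n \<in> sets borel"
  unfolding V_def
  by (intro borel_closed closed_UN finite_words_eq ballI compact_imp_closed compact_continuous_image cont_Sw) auto

lemma V_sub: "V n \<subseteq> {0..1}" using Sw_range by (auto simp: V_def words_eq_def)

lemma V_meas: "measure M (V n) = 1"
proof (induction n)
  case 0
  have "V 0 = {0..1}" by (auto simp: V_def words_eq_def)
  then show ?case using cm emeq by (simp add: cantor_measure_def)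
next
  case (Suc n)
  interpret prob_space M by (rule pM)
  have sub: "V n \<subseteq> S a -` V (Suc n) \<inter> {0..1}" if a: "a = 0 \<or> a = 2" for a
  proof
    fix y assume "y \<in> V n"
    then obtain w z where "word w" "length w = n" "z \<in> {0..1}" "y = Sw w z" by (auto simp: V_def words_eq_def)
    then have "S a y \<in> Sw (a # w) ` {0..1}" "word (a # w)" "length (a # w) = Suc n" using a by auto
    then have "S a y \<in> V (Suc n)" unfolding V_def words_eq_def by blast
    moreover have "y \<in> {0..1}" using V_sub[of n] \<open>y \<in> V n\<close> by blast
    ultimately show "y \<in> S a -` V (Suc n) \<inter> {0..1}" by simp
  qed
  have "measure M (V n) \<le> measure M (S a -` V (Suc n) \<inter> {0..1})" if a: "a = 0 \<or> a = 2" for a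
    using sub[OF a] S_pre_borel[OF V_borel] sets_M by (intro finite_measure_mono) auto
  then have m0: "measure M (S 0 -` V (Suc n) \<inter> {0..1}) \<ge> 1" and m2: "measure M (S 2 -` V (Suc n) \<inter> {0..1}) \<ge> 1"
    using Suc by auto
  have "2 * measure M (V (Suc n)) = measure M (S 0 -` V (Suc n) \<inter> {0..1}) + measure M (S 2 -` V (Suc n) \<inter> {0..1})"
    using selfsim[OF V_borel[of "Suc n"]] by simp
  then have "measure M (V (Suc n)) \<ge> 1" using m0 m2 by linarith
  moreover have "measure M (V (Suc n)) \<le> 1" by (rule prob_le_1)
  ultimately show ?case by simp
qed

lemma Cantor_V: "Cantor = (\<Inter>n. V n)" by (simp add: Cantor_def V_def)

lemma Cantor_borel: "Cantor \<in> sets borel"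
  by (intro borel_closed Cantor_closed)

lemma Cantor_meas: "measure M Cantor = 1"
proof -
  interpret prob_space M by (rule pM)
  have "AE x in M. x \<in> V n" for n
    using AE_prob_1[OF V_meas[of n]] by simp
  then have "AE x in M. \<forall>n. x \<in> V n" by (simp add: AE_all_countable)
  then have "AE x in M. x \<in> Cantor" by (simp add: Cantor_V)
  moreover have "{x \<in> space M. x \<in> Cantor} \<in> sets M" using Cantor_borel sets_M space_M by simp
  ultimately have "prob {x \<in> space M. x \<in> Cantor} = 1" by (subst prob_Collect_eq_1)
  then show ?thesis using space_M by simp
qed

lemma Cyl_meas: "word w \<Longrightarrow> measure M (Cyl w) = 1 / 2 ^ length w"
proof (induction w)
  case Nil then show ?case using Cantor_meas by simp
next
  case (Cons a w)
  then have "measure M (Cyl (a # w)) = measure M (Cyl w) / 2"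
    unfolding Cyl_Cons using Cyl_in01[of w] Cyl_borel[of w] Cyl_borel[of "a # w"]
    by (intro half) (auto simp: Cyl_Cons)
  then show ?case using Cons by simp
qed

lemma meas_int: assumes "word u" "word u'" "length u' \<le> length u"
  shows "measure M (Cyl u \<inter> Cyl u') = (if take (length u') u = u' then 1 / 2 ^ length u else 0)"
proof (cases "take (length u') u = u'")
  case True
  then have "Cyl u \<subseteq> Cyl u'" using Cyl_take_sub[OF assms(1), of "length u'"] by simp
  then have "Cyl u \<inter> Cyl u' = Cyl u" by blast
  then show ?thesis using True Cyl_meas[OF assms(1)] by simp
next
  case False
  have "Cyl (take (length u') u) \<inter> Cyl u' = {}"
    using False assms by (intro Cyl_disj) (auto simp: word_take)
  then have "Cyl u \<inter> Cyl u' = {}" using Cyl_take_sub[OF assms(1), of "length u'"] by blast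
  then show ?thesis using False by simp
qed

lemma ind_indicator: "ind A x = indicator A x" by (simp add: ind_def indicator_def)

lemma ip4: assumes "A \<in> sets borel" "B \<in> sets borel" "C \<in> sets borel" "D \<in> sets borel"
  shows "ip M (\<lambda>x. ind A x - ind B x) (\<lambda>x. ind C x - ind D x) =
    complex_of_real (measure M (A \<inter> C) - measure M (A \<inter> D) - measure M (B \<inter> C) + measure M (B \<inter> D))"
proof -
  interpret prob_space M by (rule pM)
  have pt: "cnj (ind A x - ind B x) * (ind C x - ind D x) = complex_of_real
     (indicator (A \<inter> C) x - indicator (A \<inter> D) x - indicator (B \<inter> C) x + indicator (B \<inter> D) x)" for x
    by (simp add: ind_def indicator_def)
  have i: "integrable M (indicat_real X)" if "X \<in> sets borel" for X
    using that sets_M by (intro integrable_real_indicator) (auto simp: emeq)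
  have "ip M (\<lambda>x. ind A x - ind B x) (\<lambda>x. ind C x - ind D x) = complex_of_real (integral\<^sup>L M (\<lambda>x.
     indicator (A \<inter> C) x - indicator (A \<inter> D) x - indicator (B \<inter> C) x + indicator (B \<inter> D) x))"
    unfolding ip_def pt by (rule integral_complex_of_real)
  also have "integral\<^sup>L M (\<lambda>x.
     indicator (A \<inter> C) x - indicator (A \<inter> D) x - indicator (B \<inter> C) x + indicator (B \<inter> D) x :: real)
     = measure M (A \<inter> C) - measure M (A \<inter> D) - measure M (B \<inter> C) + measure M (B \<inter> D)"
  proof -
    have b: "A \<inter> C \<in> sets borel" "A \<inter> D \<in> sets borel" "B \<inter> C \<in> sets borel" "B \<inter> D \<in> sets borel"
      using assms by auto
    note ii = i[OF b(1)] i[OF b(2)] i[OF b(3)] i[OF b(4)]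
    have "integral\<^sup>L M (\<lambda>x.
     indicator (A \<inter> C) x - indicator (A \<inter> D) x - indicator (B \<inter> C) x + indicator (B \<inter> D) x :: real)
     = integral\<^sup>L M (indicator (A \<inter> C)) - integral\<^sup>L M (indicator (A \<inter> D))
       - integral\<^sup>L M (indicator (B \<inter> C)) + integral\<^sup>L M (indicator (B \<inter> D))"
      using ii by (rule lin4)
    then show ?thesis by (simp add: integral_indicator space_M)
  qed
  finally show ?thesis .
qed

lemma ind_empty: "(\<lambda>x. ind A x - ind {} x) = ind A" unfolding ind_def by simp

lemma ip_ind: "A \<in> sets borel \<Longrightarrow> B \<in> sets borel \<Longrightarrow> ip M (ind A) (ind B) = complex_of_real (measure M (A \<inter> B))"
  using ip4[of A "{}" B "{}"] by (simp add: ind_empty)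

end

lemma geo1: "(\<Sum>k\<le>m. 1 / 2 ^ k :: real) = 2 - 1 / 2 ^ m"
  by (induction m) (auto simp: field_simps)

lemma geo2: "l < m \<Longrightarrow> (\<Sum>k\<le>m. if k \<le> l then 0 else 1 / 2 ^ k :: real) = 1 / 2 ^ l - 1 / 2 ^ m"
proof (induction m)
  case 0 then show ?case by simp
next
  case (Suc m)
  show ?case
  proof (cases "l < m")
    case True
    have "(\<Sum>k\<le>Suc m. if k \<le> l then 0 else 1 / 2 ^ k :: real)
       = (\<Sum>k\<le>m. if k \<le> l then 0 else 1 / 2 ^ k) + 1 / 2 ^ Suc m" using True by simp
    also have "\<dots> = 1 / 2 ^ l - 1 / 2 ^ m + 1 / 2 ^ Suc m" using Suc.IH[OF True] by simp
    also have "\<dots> = 1 / 2 ^ l - 1 / 2 ^ Suc m" by simp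
    finally show ?thesis .
  next
    case False
    then have lm: "l = m" using Suc by simp
    have "(\<Sum>k\<le>m. if k \<le> l then 0 else 1 / 2 ^ k :: real) = 0" using lm by (intro sum.neutral) auto
    then show ?thesis using lm by (simp add: field_simps)
  qed
qed

context fixes M assumes cm: "cantor_measure M" begin

lemma Km_pt: "x \<in> Cantor \<Longrightarrow> Km M m f x = (\<Sum>k\<le>m. ip M (ind (Cyl (addr x k))) f)"
  unfolding Km_def by (simp add: sum_words_le sum_words_eq_pt)

lemma Km_out: "x \<notin> Cantor \<Longrightarrow> Km M m f x = 0"
  unfolding Km_def by (intro sum.neutral) (auto simp: words_le_def sum_words_eq_out)

lemma addr_word: "x \<in> Cantor \<Longrightarrow> word (addr x k) \<and> length (addr x k) = k"
  using addr(1)[of x k] by (simp add: words_eq_def)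

lemma Km_phi: "Km M m phi = (\<lambda>x. complex_of_real (2 - 1 / 2 ^ m) * phi x)"
proof
  fix x show "Km M m phi x = complex_of_real (2 - 1 / 2 ^ m) * phi x"
  proof (cases "x \<in> Cantor")
    case True
    have "ip M (ind (Cyl (addr x k))) phi = complex_of_real (1 / 2 ^ k)" for k
    proof -
      have w: "word (addr x k)" "length (addr x k) = k" using addr_word[OF True] by auto
      have "ip M (ind (Cyl (addr x k))) phi = complex_of_real (measure M (Cyl (addr x k) \<inter> Cantor))"
        unfolding phi_def by (rule ip_ind[OF cm Cyl_borel Cantor_borel[OF cm]])
      also have "Cyl (addr x k) \<inter> Cantor = Cyl (addr x k)" using Cyl_sub[OF w(1)] by blast
      finally show ?thesis using Cyl_meas[OF cm w(1)] w(2) by simp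
    qed
    then have "Km M m phi x = complex_of_real (\<Sum>k\<le>m. 1 / 2 ^ k)" using Km_pt[OF True] by simp
    then show ?thesis using True geo1 by (simp add: phi_def ind_def)
  next
    case False then show ?thesis using Km_out[OF False] by (simp add: phi_def ind_def)
  qed
qed

lemma Km_haar: assumes w: "word w" "length w < m"
  shows "Km M m (haar w) = (\<lambda>x. complex_of_real ((1 / 2 ^ length w) * (1 - 1 / 2 ^ (m - length w))) * haar w x)"
proof
  fix x
  define l where "l = length w"
  have coef: "(1 / 2 ^ l) * (1 - 1 / 2 ^ (m - l)) = 1 / 2 ^ l - 1 / (2::real) ^ m"
  proof -
    have "(2::real) ^ m = 2 ^ l * 2 ^ (m - l)" using w unfolding l_def by (simp add: power_add[symmetric])
    then show ?thesis by (simp add: field_simps)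
  qed
  have wb: "word (w @ [b])" "length (w @ [b]) = Suc l" if "b = 0 \<or> b = 2" for b
    using w that l_def by auto
  show "Km M m (haar w) x = complex_of_real ((1 / 2 ^ length w) * (1 - 1 / 2 ^ (m - length w))) * haar w x"
  proof (cases "x \<in> Cantor")
    case True
    define a where "a = addr x (Suc l)"
    define \<delta> :: real where "\<delta> = (if a = w @ [0] then 1 else 0) - (if a = w @ [2] then 1 else 0)"
    have ind_b: "ind (Cyl (w @ [b])) x = (if a = w @ [b] then 1 else 0)" if b: "b = 0 \<or> b = 2" for b
    proof -
      have wq: "w @ [b] \<in> words_eq (Suc l)" using wb[OF b] by (simp add: words_eq_def)
      have "x \<in> Cyl (w @ [b]) \<longleftrightarrow> a = w @ [b]"
      proof
        assume "x \<in> Cyl (w @ [b])"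
        then show "a = w @ [b]" unfolding a_def using addr(3)[OF True wq] by simp
      next
        assume "a = w @ [b]"
        then show "x \<in> Cyl (w @ [b])" using addr(2)[OF True, of "Suc l"] unfolding a_def by simp
      qed
      then show ?thesis by (simp add: ind_def)
    qed
    have hx: "haar w x = complex_of_real \<delta>"
      unfolding haar_def \<delta>_def using ind_b[of 0] ind_b[of 2] by simp
    have trm: "ip M (ind (Cyl (addr x k))) (haar w) = complex_of_real ((if k \<le> l then 0 else 1 / 2 ^ k) * \<delta>)" for k
    proof -
      have ak: "word (addr x k)" "length (addr x k) = k" using addr_word[OF True] by auto
      have "ip M (ind (Cyl (addr x k))) (haar w) = complex_of_real
        (measure M (Cyl (addr x k) \<inter> Cyl (w @ [0])) - measure M (Cyl (addr x k) \<inter> Cyl (w @ [2])))"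
        using ip4[OF cm Cyl_borel sets.empty_sets Cyl_borel Cyl_borel, of "addr x k" "w @ [0]" "w @ [2]"]
        unfolding haar_def ind_empty[OF cm] by simp
      also have "measure M (Cyl (addr x k) \<inter> Cyl (w @ [0])) - measure M (Cyl (addr x k) \<inter> Cyl (w @ [2]))
          = (if k \<le> l then 0 else 1 / 2 ^ k) * \<delta>"
      proof (cases "k \<le> l")
        case True
        have e: "measure M (Cyl (addr x k) \<inter> Cyl (w @ [b])) = (if take k w = addr x k then 1 / 2 ^ Suc l else 0)"
          if b: "b = 0 \<or> b = 2" for b
        proof -
          have "measure M (Cyl (addr x k) \<inter> Cyl (w @ [b])) = measure M (Cyl (w @ [b]) \<inter> Cyl (addr x k))"
            by (simp add: Int_commute)
          also have "\<dots> = (if take k (w @ [b]) = addr x k then 1 / 2 ^ Suc l else 0)"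
            using meas_int[OF cm wb(1)[OF b] ak(1)] wb(2)[OF b] ak(2) True by simp
          finally show ?thesis using True l_def by simp
        qed
        show ?thesis using e[of 0] e[of 2] True by simp
      next
        case False
        have tk: "take (Suc l) (addr x k) = a" unfolding a_def using addr_take[OF True] False by simp
        have e: "measure M (Cyl (addr x k) \<inter> Cyl (w @ [b])) = (if a = w @ [b] then 1 / 2 ^ k else 0)"
          if b: "b = 0 \<or> b = 2" for b
          using meas_int[OF cm ak(1) wb(1)[OF b]] wb(2)[OF b] ak(2) False tk by simp
        show ?thesis using e[of 0] e[of 2] False unfolding \<delta>_def by simp
      qed
      finally show ?thesis .
    qed
    have "Km M m (haar w) x = complex_of_real (\<Sum>k\<le>m. (if k \<le> l then 0 else 1 / 2 ^ k) * \<delta>)"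
      using Km_pt[OF True] trm by simp
    also have "(\<Sum>k\<le>m. (if k \<le> l then 0 else 1 / 2 ^ k) * \<delta>) = (1 / 2 ^ l - 1 / 2 ^ m) * \<delta>"
      using geo2[of l m] w l_def by (simp add: sum_distrib_right[symmetric])
    finally show ?thesis using hx coef l_def by simp
  next
    case False
    have "haar w x = 0" unfolding haar_def using False Cyl_sub[OF wb(1)[of 0]] Cyl_sub[OF wb(1)[of 2]]
      by (auto simp: ind_def)
    then show ?thesis using Km_out[OF False] by simp
  qed
qed

end

definition spn :: "'i set \<Rightarrow> ('i \<Rightarrow> real \<Rightarrow> complex) \<Rightarrow> (real \<Rightarrow> complex) set" where
  "spn I b = {f. \<exists>c. f = (\<lambda>x. \<Sum>i\<in>I. c i * b i x)}"

lemma spn_base: assumes "finite I" "j \<in> I" shows "b j \<in> spn I b"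
proof -
  have "(\<Sum>i\<in>I. (if i = j then 1 else 0) * b i x) = b j x" for x
  proof -
    have "(\<Sum>i\<in>I. (if i = j then 1 else 0) * b i x) = (if j = j then 1 else 0) * b j x
      + (\<Sum>i\<in>I - {j}. (if i = j then 1 else 0) * b i x)"
      by (rule sum.remove[OF assms])
    also have "(\<Sum>i\<in>I - {j}. (if i = j then 1 else 0) * b i x) = 0" by (intro sum.neutral) auto
    finally show ?thesis by simp
  qed
  then show ?thesis unfolding spn_def by (intro CollectI exI[of _ "\<lambda>i. if i = j then 1 else 0"]) auto
qed

lemma spn_zero: "(\<lambda>x. 0) \<in> spn I b"
  unfolding spn_def by (intro CollectI exI[of _ "\<lambda>i. 0"]) simp

lemma spn_add: assumes "f \<in> spn I b" "g \<in> spn I b" shows "(\<lambda>x. f x + g x) \<in> spn I b"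
proof -
  obtain c d where "f = (\<lambda>x. \<Sum>i\<in>I. c i * b i x)" "g = (\<lambda>x. \<Sum>i\<in>I. d i * b i x)"
    using assms unfolding spn_def by blast
  then show ?thesis unfolding spn_def
    by (intro CollectI exI[of _ "\<lambda>i. c i + d i"]) (simp add: sum.distrib distrib_right)
qed

lemma spn_scale: assumes "f \<in> spn I b" shows "(\<lambda>x. a * f x) \<in> spn I b"
proof -
  obtain c where "f = (\<lambda>x. \<Sum>i\<in>I. c i * b i x)"
    using assms unfolding spn_def by blast
  then show ?thesis unfolding spn_def
    by (intro CollectI exI[of _ "\<lambda>i. a * c i"]) (simp add: sum_distrib_left mult.assoc)
qed

lemma spn_sum: assumes "finite K" "\<forall>k\<in>K. g k \<in> spn I b" shows "(\<lambda>x. \<Sum>k\<in>K. g k x) \<in> spn I b"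
  using assms
proof (induction K rule: finite_induct)
  case empty then show ?case using spn_zero by simp
next
  case (insert k K)
  then have "(\<lambda>x. g k x + (\<Sum>k\<in>K. g k x)) \<in> spn I b" by (intro spn_add) auto
  then show ?case using insert by simp
qed

lemma spn_sub: assumes "finite J" "\<forall>j\<in>J. b' j \<in> spn I b" shows "spn J b' \<subseteq> spn I b"
proof
  fix f assume "f \<in> spn J b'"
  then obtain c where f: "f = (\<lambda>x. \<Sum>j\<in>J. c j * b' j x)" unfolding spn_def by blast
  have "\<forall>j\<in>J. (\<lambda>x. c j * b' j x) \<in> spn I b" using assms(2) spn_scale by blast
  then have "(\<lambda>x. \<Sum>j\<in>J. c j * b' j x) \<in> spn I b"
    using assms(1) by (intro spn_sum)
  then show "f \<in> spn I b" using f by simp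
qed

definition Ib :: "nat \<Rightarrow> nat list option set" where
  "Ib m = insert None (Some ` {w. word w \<and> length w < m})"

lemma finite_Ib: "finite (Ib m)"
proof -
  have "{w. word w \<and> length w < m} \<subseteq> words_le m" by (auto simp: words_le_def)
  then have "finite {w. word w \<and> length w < m}" using finite_words_le finite_subset by blast
  then show ?thesis by (simp add: Ib_def)
qed

lemma Fm_spn: "Fm m = spn (words_le m) (\<lambda>u. ind (Cyl u))"
  by (simp add: Fm_def spn_def)

lemma ind_split: "word v \<Longrightarrow> ind (Cyl v) x = ind (Cyl (v @ [0])) x + ind (Cyl (v @ [2])) x"
proof -
  assume v: "word v"
  have d: "Cyl (v @ [0]) \<inter> Cyl (v @ [2]) = {}" using v by (intro Cyl_disj) auto
  show ?thesis using Cantor_Cyl_split[OF v] d by (auto simp: ind_def)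
qed

lemma ind_in_basis: "word u \<Longrightarrow> length u \<le> m \<Longrightarrow> ind (Cyl u) \<in> spn (Ib m) basis_fun"
proof (induction u rule: rev_induct)
  case Nil
  have "basis_fun None \<in> spn (Ib m) basis_fun" by (intro spn_base finite_Ib) (simp add: Ib_def)
  moreover have "basis_fun None = ind (Cyl [])" by (simp add: basis_fun_def phi_def)
  ultimately show ?case by simp
next
  case (snoc a v)
  then have v: "word v" "length v < m" and a: "a = 0 \<or> a = 2" by auto
  have iv: "ind (Cyl v) \<in> spn (Ib m) basis_fun" using snoc v by auto
  have hv: "basis_fun (Some v) \<in> spn (Ib m) basis_fun" using v by (intro spn_base finite_Ib) (simp add: Ib_def)
  define s :: complex where "s = (if a = 0 then 1/2 else - 1/2)"
  have "(\<lambda>x. 1/2 * ind (Cyl v) x + s * basis_fun (Some v) x) \<in> spn (Ib m) basis_fun"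
    by (intro spn_add spn_scale iv hv)
  moreover have "(\<lambda>x. 1/2 * ind (Cyl v) x + s * basis_fun (Some v) x) = ind (Cyl (v @ [a]))"
  proof
    fix x show "1/2 * ind (Cyl v) x + s * basis_fun (Some v) x = ind (Cyl (v @ [a])) x"
      using ind_split[OF v(1), of x] a unfolding s_def basis_fun_def haar_def
      by (auto simp: field_simps)
  qed
  ultimately show ?case by simp
qed

lemma basis_in_Fm: "i \<in> Ib m \<Longrightarrow> basis_fun i \<in> Fm m"
proof -
  assume i: "i \<in> Ib m"
  show ?thesis
  proof (cases i)
    case None
    have "ind (Cyl []) \<in> Fm m" unfolding Fm_spn by (intro spn_base finite_words_le) (simp add: words_le_def)
    then show ?thesis using None by (simp add: basis_fun_def phi_def)
  next
    case (Some w)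
    then have w: "word w" "length w < m" using i by (auto simp: Ib_def)
    have b: "ind (Cyl (w @ [b])) \<in> Fm m" if "b = 0 \<or> b = 2" for b
      unfolding Fm_spn using w that by (intro spn_base finite_words_le) (auto simp: words_le_def)
    have "(\<lambda>x. ind (Cyl (w @ [0])) x + (-1) * ind (Cyl (w @ [2])) x) \<in> Fm m"
      unfolding Fm_spn by (intro spn_add spn_scale b[unfolded Fm_spn]) auto
    then show ?thesis using Some by (simp add: basis_fun_def haar_def)
  qed
qed

lemma Fm_basis: "Fm m = spn (Ib m) basis_fun"
proof
  show "Fm m \<subseteq> spn (Ib m) basis_fun" unfolding Fm_spn
    by (intro spn_sub finite_words_le) (auto simp: words_le_def intro: ind_in_basis)
  show "spn (Ib m) basis_fun \<subseteq> Fm m" unfolding Fm_spn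
    using basis_in_Fm[unfolded Fm_spn] by (intro spn_sub finite_Ib) auto
qed


context fixes M assumes cm: "cantor_measure M" begin

lemma ind_meas: "A \<in> sets borel \<Longrightarrow> ind A \<in> borel_measurable M"
proof -
  assume A: "A \<in> sets borel"
  have "ind A = indicator A" by (rule ext) (simp add: ind_def indicator_def)
  moreover have "A \<in> sets M" using A sets_M[OF cm] by simp
  ultimately show ?thesis by simp
qed

lemma fin_M: "finite_measure M" using pM[OF cm] by (simp add: prob_space_def)

lemma L2_bounded: assumes "f \<in> borel_measurable M" "\<And>x. cmod (f x) \<le> 2" shows "L2 M f"
proof -
  have "(\<lambda>x. (cmod (f x))\<^sup>2) \<in> borel_measurable M" using assms(1) by measurable
  moreover have "norm ((cmod (f x))\<^sup>2) \<le> 4" for x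
  proof -
    have "(cmod (f x))\<^sup>2 \<le> 2\<^sup>2" using assms(2)[of x] by (intro power_mono) auto
    then show ?thesis by simp
  qed
  ultimately have "integrable M (\<lambda>x. (cmod (f x))\<^sup>2)"
    by (intro finite_measure.integrable_const_bound[OF fin_M, of _ 4]) auto
  then show ?thesis using assms(1) by (simp add: L2_def)
qed

lemma cmod_ind: "cmod (ind A x) \<le> 1" by (simp add: ind_def)

lemma cmod_ind2: "cmod (ind A x - ind B x) \<le> 2"
  by (simp add: ind_def)

definition P :: "nat list option \<Rightarrow> real set" where
  "P i = (case i of None \<Rightarrow> Cantor | Some w \<Rightarrow> Cyl (w @ [0]))"
definition Q :: "nat list option \<Rightarrow> real set" where
  "Q i = (case i of None \<Rightarrow> {} | Some w \<Rightarrow> Cyl (w @ [2]))"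

lemma P_borel: "P i \<in> sets borel" by (cases i) (auto simp: P_def Cyl_borel Cantor_borel[OF cm])
lemma Q_borel: "Q i \<in> sets borel" by (cases i) (auto simp: Q_def Cyl_borel)

lemma bf_PQ: "basis_fun i = (\<lambda>x. ind (P i) x - ind (Q i) x)"
  by (cases i) (auto simp: basis_fun_def P_def Q_def phi_def haar_def ind_def)

lemma ip_bf: "ip M (basis_fun i) (basis_fun j) = complex_of_real
   (measure M (P i \<inter> P j) - measure M (P i \<inter> Q j) - measure M (Q i \<inter> P j) + measure M (Q i \<inter> Q j))"
  unfolding bf_PQ by (rule ip4[OF cm P_borel Q_borel P_borel Q_borel])

lemma L2_bf: "L2 M (basis_fun i)"
  unfolding bf_PQ
  by (intro L2_bounded borel_measurable_diff ind_meas P_borel Q_borel cmod_ind2)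

lemma Cantor_Cyl: "word u \<Longrightarrow> measure M (Cantor \<inter> Cyl u) = 1 / 2 ^ length u"
proof -
  assume u: "word u"
  then have "Cantor \<inter> Cyl u = Cyl u" using Cyl_sub by blast
  then show ?thesis using Cyl_meas[OF cm u] by simp
qed

lemma disj02: "word w \<Longrightarrow> Cyl (w @ [0]) \<inter> Cyl (w @ [2]) = {}"
  by (intro Cyl_disj) auto

lemma ip_bf_self: assumes "i \<in> Ib m" shows "ip M (basis_fun i) (basis_fun i) \<noteq> 0"
proof (cases i)
  case None
  have "measure M (Cantor \<inter> Cantor) = 1" using Cantor_meas[OF cm] by simp
  then show ?thesis using None by (simp add: ip_bf P_def Q_def)
next
  case (Some w)
  then have w: "word w" using assms by (auto simp: Ib_def)
  have m0: "measure M (Cyl (w @ [b]) \<inter> Cyl (w @ [b])) = 1 / 2 ^ Suc (length w)" if "b = 0 \<or> b = 2" for b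
    using Cyl_meas[OF cm, of "w @ [b]"] w that by auto
  have "ip M (basis_fun i) (basis_fun i) = complex_of_real (2 / 2 ^ Suc (length w))"
    using Some m0[of 0] m0[of 2] disj02[OF w] by (simp add: ip_bf P_def Q_def Int_commute)
  then show ?thesis by simp
qed

lemma mi: assumes v: "word v" and w: "word w" and le: "length v \<le> length w" and ne: "v \<noteq> w"
  and a: "a = 0 \<or> a = 2" and b: "b = 0 \<or> b = 2"
  shows "measure M (Cyl (v @ [a]) \<inter> Cyl (w @ [b])) =
    (if length v < length w \<and> take (Suc (length v)) w = v @ [a] then 1 / 2 ^ Suc (length w) else 0)"
proof -
  have "measure M (Cyl (v @ [a]) \<inter> Cyl (w @ [b])) = measure M (Cyl (w @ [b]) \<inter> Cyl (v @ [a]))"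
    by (simp add: Int_commute)
  also have "\<dots> = (if take (Suc (length v)) (w @ [b]) = v @ [a] then 1 / 2 ^ Suc (length w) else 0)"
    using meas_int[OF cm, of "w @ [b]" "v @ [a]"] v w a b le by simp
  also have "\<dots> = (if length v < length w \<and> take (Suc (length v)) w = v @ [a] then 1 / 2 ^ Suc (length w) else 0)"
  proof (cases "length v < length w")
    case True
    then have "take (Suc (length v)) (w @ [b]) = take (Suc (length v)) w" by simp
    then show ?thesis using True by simp
  next
    case False
    then have "length v = length w" using le by simp
    then have "take (Suc (length v)) (w @ [b]) = w @ [b]" by simp
    moreover have "w @ [b] \<noteq> v @ [a]" using ne by simp
    ultimately show ?thesis using False by simp
  qed
  finally show ?thesis .
qed

lemma F_zero_le: assumes v: "word v" and w: "word w" and le: "length v \<le> length w" and ne: "v \<noteq> w"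
  shows "measure M (Cyl (v @ [0]) \<inter> Cyl (w @ [0])) - measure M (Cyl (v @ [0]) \<inter> Cyl (w @ [2]))
       - measure M (Cyl (v @ [2]) \<inter> Cyl (w @ [0])) + measure M (Cyl (v @ [2]) \<inter> Cyl (w @ [2])) = 0"
  using mi[OF v w le ne, of 0 0] mi[OF v w le ne, of 0 2] mi[OF v w le ne, of 2 0] mi[OF v w le ne, of 2 2]
  by simp

lemma ip_bf_orth: assumes "i \<in> Ib m" "j \<in> Ib m" "i \<noteq> j" shows "ip M (basis_fun i) (basis_fun j) = 0"
proof (cases i)
  case None
  then obtain w where j: "j = Some w" "word w" using assms by (cases j) (auto simp: Ib_def)
  then show ?thesis using None Cantor_Cyl[of "w @ [0]"] Cantor_Cyl[of "w @ [2]"]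
    by (simp add: ip_bf P_def Q_def)
next
  case (Some v)
  then have v: "word v" using assms by (auto simp: Ib_def)
  show ?thesis
  proof (cases j)
    case None
    then show ?thesis using Some Cantor_Cyl[of "v @ [0]"] Cantor_Cyl[of "v @ [2]"] v
      by (simp add: ip_bf P_def Q_def Int_commute)
  next
    case (Some w)
    then have w: "word w" and ne: "v \<noteq> w" using assms \<open>i = Some v\<close> by (auto simp: Ib_def)
    show ?thesis
    proof (cases "length v \<le> length w")
      case True
      then show ?thesis using F_zero_le[OF v w True ne] Some \<open>i = Some v\<close> by (simp add: ip_bf P_def Q_def)
    next
      case False
      then have "length w \<le> length v" by simp
      from F_zero_le[OF w v this] ne
      show ?thesis using Some \<open>i = Some v\<close> by (simp add: ip_bf P_def Q_def Int_commute algebra_simps)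
    qed
  qed
qed

lemma orth_basis: "orthogonal_basis M (insert None (Some ` {w. word w \<and> length w < m})) basis_fun (Fm m)"
  unfolding orthogonal_basis_def Ib_def[symmetric] Fm_basis
  using finite_Ib L2_bf ip_bf_self ip_bf_orth by (auto simp: spn_def)

end

context fixes M assumes cm: "cantor_measure M" begin

lemma L2_int: assumes "L2 M f" shows "integrable M f"
proof -
  have f: "f \<in> borel_measurable M" "integrable M (\<lambda>x. (cmod (f x))\<^sup>2)" using assms by (auto simp: L2_def)
  have ig: "integrable M (\<lambda>x. 1 + (cmod (f x))\<^sup>2)"
    by (rule Bochner_Integration.integrable_add[OF finite_measure.integrable_const[OF fin_M[OF cm]] f(2)])
  have nb: "norm (f x) \<le> norm (1 + (cmod (f x))\<^sup>2)" for x
  proof -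
    have e: "(cmod (f x) - 1/2)\<^sup>2 = (cmod (f x))\<^sup>2 - cmod (f x) + 1/4" by (simp add: power2_eq_square algebra_simps)
    have "0 \<le> (cmod (f x) - 1/2)\<^sup>2" by simp
    then have "cmod (f x) \<le> 1 + (cmod (f x))\<^sup>2" unfolding e by linarith
    then show ?thesis by simp
  qed
  show ?thesis by (rule Bochner_Integration.integrable_bound[OF ig f(1)]) (rule AE_I2, rule nb)
qed

lemma int_indf: assumes "integrable M F" "A \<in> sets borel" shows "integrable M (\<lambda>x. cnj (ind A x) * F x)"
proof -
  note [measurable] = ind_meas[OF cm assms(2)] borel_measurable_integrable[OF assms(1)]
  have c: "cnj (ind A x) = ind A x" for x by (simp add: ind_def)
  have "(\<lambda>x. ind A x * F x) \<in> borel_measurable M" by measurable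
  then have "(\<lambda>x. cnj (ind A x) * F x) \<in> borel_measurable M" unfolding c .
  moreover have nl: "norm (cnj (ind A x) * F x) \<le> norm (F x)" for x by (simp add: ind_def)
  ultimately show ?thesis by (intro Bochner_Integration.integrable_bound[OF assms(1)] AE_I2 nl)
qed

lemma int_ind: "A \<in> sets borel \<Longrightarrow> integrable M (ind A)"
  using cmod_ind[OF cm] ind_meas[OF cm] by (intro finite_measure.integrable_const_bound[OF fin_M[OF cm], of _ 1]) auto

lemma int_G: "integrable M (\<lambda>x. \<Sum>w\<in>W. d w * ind (Cyl w) x)"
  by (intro Bochner_Integration.integrable_sum integrable_mult_right int_ind Cyl_borel)

lemma ip_diff2: "integrable M F \<Longrightarrow> integrable M G \<Longrightarrow> A \<in> sets borel \<Longrightarrow>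
  ip M (ind A) (\<lambda>x. F x - G x) = ip M (ind A) F - ip M (ind A) G"
  unfolding ip_def using int_indf
  by (simp add: right_diff_distrib Bochner_Integration.integral_diff)

lemma ip_ind_G: assumes "finite W" "v \<in> W" "A \<in> sets borel"
  shows "ip M (ind A) (\<lambda>x. \<Sum>w\<in>W. d w * ind (Cyl w) x) = (\<Sum>w\<in>W. d w * ip M (ind A) (ind (Cyl w)))"
proof -
  have "ip M (ind A) (\<lambda>x. \<Sum>w\<in>W. d w * ind (Cyl w) x) = integral\<^sup>L M (\<lambda>x. \<Sum>w\<in>W. d w * (cnj (ind A x) * ind (Cyl w) x))"
    unfolding ip_def by (simp add: sum_distrib_left mult.left_commute)
  also have "\<dots> = (\<Sum>w\<in>W. integral\<^sup>L M (\<lambda>x. d w * (cnj (ind A x) * ind (Cyl w) x)))"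
    by (intro Bochner_Integration.integral_sum integrable_mult_right int_indf int_ind Cyl_borel assms(3))
  also have "\<dots> = (\<Sum>w\<in>W. d w * ip M (ind A) (ind (Cyl w)))"
    unfolding ip_def by simp
  finally show ?thesis .
qed

lemma ip_G_left: assumes "integrable M F"
  shows "ip M (\<lambda>x. \<Sum>w\<in>W. e w * ind (Cyl w) x) F = (\<Sum>w\<in>W. cnj (e w) * ip M (ind (Cyl w)) F)"
proof -
  have "ip M (\<lambda>x. \<Sum>w\<in>W. e w * ind (Cyl w) x) F = integral\<^sup>L M (\<lambda>x. \<Sum>w\<in>W. cnj (e w) * (cnj (ind (Cyl w) x) * F x))"
    unfolding ip_def by (simp add: sum_distrib_right mult.assoc)
  also have "\<dots> = (\<Sum>w\<in>W. integral\<^sup>L M (\<lambda>x. cnj (e w) * (cnj (ind (Cyl w) x) * F x)))"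
    by (intro Bochner_Integration.integral_sum integrable_mult_right int_indf assms Cyl_borel)
  also have "\<dots> = (\<Sum>w\<in>W. cnj (e w) * ip M (ind (Cyl w)) F)"
    unfolding ip_def by simp
  finally show ?thesis .
qed

lemma ip_cyl_same: assumes "v \<in> words_eq n" "w \<in> words_eq n"
  shows "ip M (ind (Cyl v)) (ind (Cyl w)) = (if w = v then 1 / 2 ^ n else 0)"
proof -
  have "ip M (ind (Cyl v)) (ind (Cyl w)) = complex_of_real (measure M (Cyl v \<inter> Cyl w))"
    by (rule ip_ind[OF cm Cyl_borel Cyl_borel])
  also have "measure M (Cyl v \<inter> Cyl w) = (if take (length w) v = w then 1 / 2 ^ length v else 0)"
    using assms by (intro meas_int[OF cm]) (auto simp: words_eq_def)
  finally show ?thesis using assms by (auto simp: words_eq_def)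
qed

lemma ip_G_coef: assumes "v \<in> words_eq n"
  shows "ip M (ind (Cyl v)) (\<lambda>x. \<Sum>w\<in>words_eq n. d w * ind (Cyl w) x) = d v / 2 ^ n"
proof -
  have "ip M (ind (Cyl v)) (\<lambda>x. \<Sum>w\<in>words_eq n. d w * ind (Cyl w) x)
     = (\<Sum>w\<in>words_eq n. d w * (if w = v then 1 / 2 ^ n else 0))"
    using ip_ind_G[OF finite_words_eq assms Cyl_borel] ip_cyl_same[OF assms] by simp
  also have "\<dots> = d v / 2 ^ n"
    using assms finite_words_eq by (simp add: if_distrib sum.delta cong: if_cong)
  finally show ?thesis .
qed

lemma En_eq: assumes f: "L2 M f"
  shows "En M n f = (\<lambda>x. \<Sum>w\<in>words_eq n. (2 ^ n * ip M (ind (Cyl w)) f) * ind (Cyl w) x)"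
proof -
  have fi: "integrable M f" by (rule L2_int[OF f])
  define c where "c w = 2 ^ n * ip M (ind (Cyl w)) f" for w
  define g0 where "g0 = (\<lambda>x. \<Sum>w\<in>words_eq n. c w * ind (Cyl w) x)"
  define PP where "PP g \<longleftrightarrow> g \<in> Gn n \<and> (\<forall>h\<in>Gn n. ip M h (\<lambda>x. f x - g x) = 0)" for g
  have coef0: "ip M (ind (Cyl v)) (\<lambda>x. f x - g x) = ip M (ind (Cyl v)) f - d v / 2 ^ n"
    if "v \<in> words_eq n" "g = (\<lambda>x. \<Sum>w\<in>words_eq n. d w * ind (Cyl w) x)" for v g d
    using ip_diff2[OF fi int_G Cyl_borel] ip_G_coef[OF that(1)] that(2) by simp
  have "PP g0"
    unfolding PP_def
  proof
    show "g0 \<in> Gn n" unfolding g0_def Gn_def by blast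
    show "\<forall>h\<in>Gn n. ip M h (\<lambda>x. f x - g0 x) = 0"
    proof
      fix h assume "h \<in> Gn n"
      then obtain e where h: "h = (\<lambda>x. \<Sum>w\<in>words_eq n. e w * ind (Cyl w) x)" unfolding Gn_def by blast
      have i: "integrable M (\<lambda>x. f x - g0 x)" unfolding g0_def
        by (intro Bochner_Integration.integrable_diff fi int_G)
      have "ip M h (\<lambda>x. f x - g0 x) = (\<Sum>w\<in>words_eq n. cnj (e w) * ip M (ind (Cyl w)) (\<lambda>x. f x - g0 x))"
        unfolding h by (rule ip_G_left[OF i])
      also have "\<dots> = 0"
      proof (intro sum.neutral ballI)
        fix w assume w: "w \<in> words_eq n"
        have "ip M (ind (Cyl w)) (\<lambda>x. f x - g0 x) = ip M (ind (Cyl w)) f - c w / 2 ^ n"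
          by (rule coef0[OF w g0_def])
        also have "\<dots> = 0" by (simp add: c_def)
        finally show "cnj (e w) * ip M (ind (Cyl w)) (\<lambda>x. f x - g0 x) = 0" by simp
      qed
      finally show "ip M h (\<lambda>x. f x - g0 x) = 0" .
    qed
  qed
  have uniq: "g = g0" if "PP g" for g
  proof -
    from that obtain d where g: "g = (\<lambda>x. \<Sum>w\<in>words_eq n. d w * ind (Cyl w) x)"
      unfolding PP_def Gn_def by blast
    have "d w = c w" if w: "w \<in> words_eq n" for w
    proof -
      have "ind (Cyl w) \<in> Gn n"
      proof -
        have "ind (Cyl w) \<in> spn (words_eq n) (\<lambda>u. ind (Cyl u))" by (rule spn_base[OF finite_words_eq w])
        then show ?thesis by (simp add: spn_def Gn_def)
      qed
      then have "ip M (ind (Cyl w)) (\<lambda>x. f x - g x) = 0" using \<open>PP g\<close> unfolding PP_def by blast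
      then have "ip M (ind (Cyl w)) f - d w / 2 ^ n = 0" using coef0[OF w g] by simp
      then show ?thesis by (simp add: c_def field_simps)
    qed
    then show ?thesis unfolding g g0_def by (intro ext sum.cong) auto
  qed
  have "En M n f = g0"
    unfolding En_def PP_def[symmetric] by (rule someI2[of PP g0, OF \<open>PP g0\<close> uniq])
  then show ?thesis by (simp add: g0_def c_def)
qed

lemma scal: "complex_of_real (1 / 2 ^ n) * ((2 ^ n * a) * b) = a * b"
proof -
  have h: "complex_of_real (1 / 2 ^ n) * 2 ^ n = 1"
  proof -
    have "complex_of_real (1 / 2 ^ n) * 2 ^ n = complex_of_real (1 / 2 ^ n * 2 ^ n)" by simp
    also have "(1 / 2 ^ n * 2 ^ n :: real) = 1" by simp
    finally show ?thesis by simp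
  qed
  have "complex_of_real (1 / 2 ^ n) * ((2 ^ n * a) * b) = (complex_of_real (1 / 2 ^ n) * 2 ^ n) * (a * b)"
    by (simp only: mult.assoc)
  also have "\<dots> = a * b" using h by simp
  finally show ?thesis .
qed

lemma Km_En: assumes "L2 M f"
  shows "Km M m f x = (\<Sum>n\<le>m. complex_of_real (1 / 2 ^ n) * En M n f x)"
proof -
  have "Km M m f x = (\<Sum>n\<le>m. \<Sum>w\<in>words_eq n. ip M (ind (Cyl w)) f * ind (Cyl w) x)"
    unfolding Km_def by (rule sum_words_le)
  also have "\<dots> = (\<Sum>n\<le>m. complex_of_real (1 / 2 ^ n) * En M n f x)"
  proof (intro sum.cong refl)
    fix n
    have "complex_of_real (1 / 2 ^ n) * En M n f x
       = (\<Sum>w\<in>words_eq n. complex_of_real (1 / 2 ^ n) * ((2 ^ n * ip M (ind (Cyl w)) f) * ind (Cyl w) x))"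
      unfolding En_eq[OF assms] by (simp add: sum_distrib_left)
    also have "\<dots> = (\<Sum>w\<in>words_eq n. ip M (ind (Cyl w)) f * ind (Cyl w) x)"
      by (intro sum.cong refl) (rule scal)
    finally show "(\<Sum>w\<in>words_eq n. ip M (ind (Cyl w)) f * ind (Cyl w) x) = complex_of_real (1 / 2 ^ n) * En M n f x"
      by simp
  qed
  finally show ?thesis .
qed

end

theorem proposition3p1:
  fixes M :: "real measure" and m :: nat
  assumes "cantor_measure M"
  shows "orthogonal_basis M (insert None (Some ` {w. word w \<and> length w < m})) basis_fun (Fm m)
    \<and> Km M m phi = (\<lambda>x. complex_of_real (2 - 1 / 2 ^ m) * phi x)
    \<and> (\<forall>w. word w \<and> length w < m \<longrightarrow>
         Km M m (haar w) = (\<lambda>x. complex_of_real ((1 / 2 ^ length w) * (1 - 1 / 2 ^ (m - length w))) * haar w x))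
    \<and> (\<forall>f. L2 M f \<longrightarrow> (AE x in M. Km M m f x = (\<Sum>n\<le>m. complex_of_real (1 / 2 ^ n) * En M n f x)))"
proof (intro conjI allI impI)
  show "orthogonal_basis M (insert None (Some ` {w. word w \<and> length w < m})) basis_fun (Fm m)"
    by (rule orth_basis[OF assms])
  show "Km M m phi = (\<lambda>x. complex_of_real (2 - 1 / 2 ^ m) * phi x)"
    by (rule Km_phi[OF assms])
next
  fix w assume "word w \<and> length w < m"
  then show "Km M m (haar w) = (\<lambda>x. complex_of_real ((1 / 2 ^ length w) * (1 - 1 / 2 ^ (m - length w))) * haar w x)"
    using Km_haar[OF assms] by blast
next
  fix f assume "L2 M f"
  then show "AE x in M. Km M m f x = (\<Sum>n\<le>m. complex_of_real (1 / 2 ^ n) * En M n f x)"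
    using Km_En[OF assms] by (intro AE_I2) blast
qed

end
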